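(* Consider the system $x_{t+1}^{(i)} = f_0(x_t^{(i)}) + B(x_t^{(i)})u_t^{(i)} - f(x_t^{(i)},c^{(i)}) + w_t^{(i)}$, $x_1^{(i)}=0$, for $i=1,\dots,N$, $t=1,\dots,T$, under the standing assumptions in the context (full actuation, $\|w_t^{(i)}\|\le W$, e-ISS of $f_0$ with constants $\beta,\gamma,\rho$). Suppose $f(x,c)=Y_1(x)\Theta+Y_2(x)c$ with known $Y_1:\mathbb{R}^n\to\mathbb{R}^{n\times p}$, $Y_2:\mathbb{R}^n\to\mathbb{R}^{n\times h}$, $\|Y_1(x)\|\le K_1$, $\|Y_2(x)\|\le K_2$ for all $x$, and unknown $\Theta\in\mathbb{R}^p$, $c^{(i)}\in\mathbb{R}^h$ with $\|\Theta\|\le K_\Theta$, $\|c^{(i)}\|\le K_c$ for all $i$. Let $\mathcal{K}_1=\{\hat\Theta:\|\hat\Theta\|\le K_\Theta\}$, $\mathcal{K}_2=\{\hat c:\|\hat c\|\le K_c\}$, and define $$C_1=4K_1^2K_\Theta+4K_1K_2K_c+2K_1W,\qquad C_2=4K_2^2K_c+4K_1K_2K_\Theta+2K_2W.$$ (a) OMAC with $\hat f_t^{(i)}=Y_1(x_t^{(i)})\hat\Theta^{(i)}+Y_2(x_t^{(i)})\hat c_t^{(i)}$, using projected online gradient descent for both adapters with learning rates $\bar\eta^{(i)}=\frac{2K_\Theta}{C_1T\sqrt{i}}$ (outer) and $\eta_t^{(i)}=\frac{2K_c}{C_2\sqrt t}$ (inner), satisfies $$\mathsf{ACE}(\mathrm{OMAC})\le\frac{\gamma}{1-\rho}\sqrt{W^2+3\Big(K_\Theta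 C_1\frac{1}{\sqrt N}+K_cC_2\frac{1}{\sqrt T}\Big)}.$$ (b) The baseline adaptive controller, which adapts $\hat\alpha=[\hat\Theta;\hat c]$ jointly at every time step by projected online gradient descent, satisfies $$\mathsf{ACE}(\mathrm{baseline})\le\frac{\gamma}{1-\rho}\sqrt{W^2+3\sqrt{K_\Theta^2+K_c^2}\sqrt{C_1^2+C_2^2}\frac{1}{\sqrt T}}.$$
   Context: Standing assumptions: $x_t^{(i)}\in\mathbb{R}^n$, $u_t^{(i)}\in\mathbb{R}^m$; $f_0:\mathbb{R}^n\to\mathbb{R}^n$ and $B:\mathbb{R}^n\to\mathbb{R}^{n\times m}$ known with $\mathrm{rank}(B(x))=n$ for all $x$; disturbances $w_t^{(i)}$ (possibly adversarial) with $\|w_t^{(i)}\|\le W$; $c^{(i)}$ may be chosen adversarially. $f_0$ is e-ISS: there exist $\beta,\gamma\ge0$, $0\le\rho<1$ such that for every $t$ and $v_1,\dots,v_{t-1}\in\mathbb{R}^n$ the iterates $x_{k+1}=f_0(x_k)+v_k$ satisfy $\|x_t\|\le\beta\rho^{t-1}\|x_1\|+\gamma\sum_{k=1}^{t-1}\rho^{t-1-k}\|v_k\|$. $\|\cdot\|$ is the Euclidean norm for vectors and spectral norm for matrices. $\mathsf{ACE}=\frac1{TN}\sum_{i=1}^N\sum_{t=1}^T\|x_t^{(i)}\|$. Both controllers are certainty-equivalence: at step $(i,t)$ they compute an estimate $\hat f_t^{(i)}$ and apply $u_t^{(i)}=B(x_t^{(i)})^{\dagger}\hat f_t^{(i)}$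 (pseudo-inverse); then they observe $y_t^{(i)}=f_0(x_t^{(i)})+B(x_t^{(i)})u_t^{(i)}-x_{t+1}^{(i)}=f(x_t^{(i)},c^{(i)})-w_t^{(i)}$. Loss: $\ell_t^{(i)}(\hat\Theta,\hat c)=\|Y_1(x_t^{(i)})\hat\Theta+Y_2(x_t^{(i)})\hat c-y_t^{(i)}\|^2$. Projected OGD on a convex set $\mathcal{K}$ with step sizes $\eta_t$: start at a point of $\mathcal{K}$, update $z_{t+1}=\Pi_{\mathcal{K}}(z_t-\eta_t\nabla_t)$ where $\Pi_{\mathcal{K}}$ is Euclidean projection and $\nabla_t$ the gradient of the current cost at $z_t$. OMAC in (a): $\hat\Theta^{(1)}\in\mathcal{K}_1$; in each environment $i$, $\hat c_1^{(i)}\in\mathcal{K}_2$ and $\hat c_{t+1}^{(i)}=\Pi_{\mathcal{K}_2}(\hat c_t^{(i)}-\eta_t^{(i)}\nabla_{\hat c}\ell_t^{(i)}(\hat\Theta^{(i)},\hat c_t^{(i)}))$; after environment $i$, $\hat\Theta^{(i+1)}=\Pi_{\mathcal{K}_1}(\hat\Theta^{(i)}-\bar\eta^{(i)}\sum_{t=1}^T\nabla_{\hat\Theta}\ell_t^{(i)}(\hat\Theta^{(i)},\hat c_t^{(i)}))$. The $c^{(i)}$ are never observed. Baseline in (b): $\hat f_t^{(i)}=Y_1(x_t^{(i)})\hat\Theta_t^{(i)}+Y_2(x_t^{(i)})\hat c_t^{(i)}$, where in each environment $\hat\alpha_t^{(i)}=[\hat\Theta_t^{(i)};\hat c_t^{(i)}]$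 starts in $\bar{\mathcal{K}}=\{[\hat\Theta;\hat c]:\|\hat\Theta\|\le K_\Theta,\|\hat c\|\le K_c\}$ and is updated every step by projected OGD on $\bar{\mathcal K}$ for the loss $\ell_t^{(i)}$ viewed as a function of $\hat\alpha$, with step sizes $\frac{2\sqrt{K_\Theta^2+K_c^2}}{\sqrt{C_1^2+C_2^2}\sqrt t}$. *)

theory Defs
  imports "HOL-Analysis.Analysis"
begin

text \<open>State space R^n = real^'n, input space R^m = real^'m,
  Theta in R^p = real^'p, environment parameter c in R^h = real^'h.
  A matrix in R^(a x b) is an element of real^'b^'a, applied to vectors with *v.
  Environments i = 1..N and times t = 1..T are natural numbers starting at 1.
  Disturbances are given as w i t, environment parameters as c i.
  Trajectory functions below are indexed by k = t - 1 (index 0 is time 1).\<close>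

definition pinv :: "real^'m^'n \<Rightarrow> real^'n^'m" where
  "pinv A = (THE X. A ** X ** A = A \<and> X ** A ** X = X \<and>
                    transpose (A ** X) = A ** X \<and> transpose (X ** A) = X ** A)"

definition specnorm :: "real^'a^'b \<Rightarrow> real" where
  "specnorm A = onorm (\<lambda>v. A *v v)"

definition projball :: "real \<Rightarrow> 'a::euclidean_space \<Rightarrow> 'a" where
  "projball K z = closest_point (cball 0 K) z"

definition model ::
  "(real^'n \<Rightarrow> real^'p^'n) \<Rightarrow> (real^'n \<Rightarrow> real^'h^'n) \<Rightarrow> real^'n \<Rightarrow> real^'p \<Rightarrow> real^'h \<Rightarrow> real^'n"
  where "model Y1 Y2 x th cc = Y1 x *v th + Y2 x *v cc"

definition ce_input :: "(real^'n \<Rightarrow> real^'m^'n) \<Rightarrow> real^'n \<Rightarrow> real^'n \<Rightarrow> real^'m" where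
  "ce_input B x fh = pinv (B x) *v fh"

definition plant_next ::
  "(real^'n \<Rightarrow> real^'n) \<Rightarrow> (real^'n \<Rightarrow> real^'m^'n) \<Rightarrow> (real^'n \<Rightarrow> real^'p^'n) \<Rightarrow>
   (real^'n \<Rightarrow> real^'h^'n) \<Rightarrow> real^'p \<Rightarrow> real^'h \<Rightarrow> real^'n \<Rightarrow> real^'n \<Rightarrow> real^'m \<Rightarrow> real^'n" where
  "plant_next f0 B Y1 Y2 Th cc wv x u = f0 x + B x *v u - model Y1 Y2 x Th cc + wv"

definition observe ::
  "(real^'n \<Rightarrow> real^'n) \<Rightarrow> (real^'n \<Rightarrow> real^'m^'n) \<Rightarrow> real^'n \<Rightarrow> real^'m \<Rightarrow> real^'n \<Rightarrow> real^'n" where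
  "observe f0 B x u x' = f0 x + B x *v u - x'"

definition loss ::
  "(real^'n \<Rightarrow> real^'p^'n) \<Rightarrow> (real^'n \<Rightarrow> real^'h^'n) \<Rightarrow> real^'n \<Rightarrow> real^'n \<Rightarrow> real^'p \<Rightarrow> real^'h \<Rightarrow> real" where
  "loss Y1 Y2 x y thh ch = (norm (Y1 x *v thh + Y2 x *v ch - y))\<^sup>2"

definition grad_theta ::
  "(real^'n \<Rightarrow> real^'p^'n) \<Rightarrow> (real^'n \<Rightarrow> real^'h^'n) \<Rightarrow> real^'n \<Rightarrow> real^'n \<Rightarrow> real^'p \<Rightarrow> real^'h \<Rightarrow> real^'p" where
  "grad_theta Y1 Y2 x y thh ch = 2 *\<^sub>R (transpose (Y1 x) *v (Y1 x *v thh + Y2 x *v ch - y))"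

definition grad_c ::
  "(real^'n \<Rightarrow> real^'p^'n) \<Rightarrow> (real^'n \<Rightarrow> real^'h^'n) \<Rightarrow> real^'n \<Rightarrow> real^'n \<Rightarrow> real^'p \<Rightarrow> real^'h \<Rightarrow> real^'h" where
  "grad_c Y1 Y2 x y thh ch = 2 *\<^sub>R (transpose (Y2 x) *v (Y1 x *v thh + Y2 x *v ch - y))"

definition omac_step ::
  "(real^'n \<Rightarrow> real^'n) \<Rightarrow> (real^'n \<Rightarrow> real^'m^'n) \<Rightarrow> (real^'n \<Rightarrow> real^'p^'n) \<Rightarrow>
   (real^'n \<Rightarrow> real^'h^'n) \<Rightarrow> real^'p \<Rightarrow> real \<Rightarrow> real \<Rightarrow> real^'h \<Rightarrow> (nat \<Rightarrow> real^'n) \<Rightarrow>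
   real^'p \<Rightarrow> nat \<Rightarrow> (real^'n) \<times> (real^'h) \<Rightarrow> (real^'n) \<times> (real^'h)" where
  "omac_step f0 B Y1 Y2 Th Kc C2 cc wi thh t s =
     (let x = fst s; ch = snd s;
          u = ce_input B x (Y1 x *v thh + Y2 x *v ch);
          x' = plant_next f0 B Y1 Y2 Th cc (wi t) x u;
          y = observe f0 B x u x';
          eta = 2 * Kc / (C2 * sqrt (real t))
      in (x', projball Kc (ch - eta *\<^sub>R grad_c Y1 Y2 x y thh ch)))"

primrec omac_env ::
  "(real^'n \<Rightarrow> real^'n) \<Rightarrow> (real^'n \<Rightarrow> real^'m^'n) \<Rightarrow> (real^'n \<Rightarrow> real^'p^'n) \<Rightarrow>
   (real^'n \<Rightarrow> real^'h^'n) \<Rightarrow> real^'p \<Rightarrow> real \<Rightarrow> real \<Rightarrow> real^'h \<Rightarrow> (nat \<Rightarrow> real^'n) \<Rightarrow>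
   real^'p \<Rightarrow> real^'h \<Rightarrow> nat \<Rightarrow> (real^'n) \<times> (real^'h)" where
  "omac_env f0 B Y1 Y2 Th Kc C2 cc wi thh ch1 0 = (0, ch1)"
| "omac_env f0 B Y1 Y2 Th Kc C2 cc wi thh ch1 (Suc k) =
     omac_step f0 B Y1 Y2 Th Kc C2 cc wi thh (Suc k) (omac_env f0 B Y1 Y2 Th Kc C2 cc wi thh ch1 k)"

definition omac_outer_grad ::
  "(real^'n \<Rightarrow> real^'n) \<Rightarrow> (real^'n \<Rightarrow> real^'m^'n) \<Rightarrow> (real^'n \<Rightarrow> real^'p^'n) \<Rightarrow>
   (real^'n \<Rightarrow> real^'h^'n) \<Rightarrow> real^'p \<Rightarrow> real \<Rightarrow> real \<Rightarrow> real^'h \<Rightarrow> (nat \<Rightarrow> real^'n) \<Rightarrow>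
   real^'p \<Rightarrow> real^'h \<Rightarrow> nat \<Rightarrow> real^'p" where
  "omac_outer_grad f0 B Y1 Y2 Th Kc C2 cc wi thh ch1 T =
     (\<Sum>t = 1..T.
        let s = omac_env f0 B Y1 Y2 Th Kc C2 cc wi thh ch1 (t - 1);
            x = fst s; ch = snd s;
            u = ce_input B x (Y1 x *v thh + Y2 x *v ch);
            x' = fst (omac_env f0 B Y1 Y2 Th Kc C2 cc wi thh ch1 t);
            y = observe f0 B x u x'
        in grad_theta Y1 Y2 x y thh ch)"

text \<open>Outer estimate Thetahat^(i) for environment i = j + 1.\<close>
primrec omac_theta ::
  "(real^'n \<Rightarrow> real^'n) \<Rightarrow> (real^'n \<Rightarrow> real^'m^'n) \<Rightarrow> (real^'n \<Rightarrow> real^'p^'n) \<Rightarrow>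
   (real^'n \<Rightarrow> real^'h^'n) \<Rightarrow> real^'p \<Rightarrow> real \<Rightarrow> real \<Rightarrow> real \<Rightarrow> real \<Rightarrow>
   (nat \<Rightarrow> real^'h) \<Rightarrow> (nat \<Rightarrow> nat \<Rightarrow> real^'n) \<Rightarrow> nat \<Rightarrow>
   real^'p \<Rightarrow> (nat \<Rightarrow> real^'h) \<Rightarrow> nat \<Rightarrow> real^'p" where
  "omac_theta f0 B Y1 Y2 Th KTh Kc C1 C2 c w T th1 ch1 0 = th1"
| "omac_theta f0 B Y1 Y2 Th KTh Kc C1 C2 c w T th1 ch1 (Suc j) =
     (let thh = omac_theta f0 B Y1 Y2 Th KTh Kc C1 C2 c w T th1 ch1 j;
          i = Suc j;
          etabar = 2 * KTh / (C1 * real T * sqrt (real i))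
      in projball KTh (thh - etabar *\<^sub>R
            omac_outer_grad f0 B Y1 Y2 Th Kc C2 (c i) (w i) thh (ch1 i) T))"

definition omac_x ::
  "(real^'n \<Rightarrow> real^'n) \<Rightarrow> (real^'n \<Rightarrow> real^'m^'n) \<Rightarrow> (real^'n \<Rightarrow> real^'p^'n) \<Rightarrow>
   (real^'n \<Rightarrow> real^'h^'n) \<Rightarrow> real^'p \<Rightarrow> real \<Rightarrow> real \<Rightarrow> real \<Rightarrow> real \<Rightarrow>
   (nat \<Rightarrow> real^'h) \<Rightarrow> (nat \<Rightarrow> nat \<Rightarrow> real^'n) \<Rightarrow> nat \<Rightarrow>
   real^'p \<Rightarrow> (nat \<Rightarrow> real^'h) \<Rightarrow> nat \<Rightarrow> nat \<Rightarrow> real^'n" where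
  "omac_x f0 B Y1 Y2 Th KTh Kc C1 C2 c w T th1 ch1 i t =
     fst (omac_env f0 B Y1 Y2 Th Kc C2 (c i) (w i)
            (omac_theta f0 B Y1 Y2 Th KTh Kc C1 C2 c w T th1 ch1 (i - 1)) (ch1 i) (t - 1))"

text \<open>One step of the baseline: state (x_t, (Thetahat_t, chat_t)); joint projected OGD on
  Kbar = cball 0 KTh x cball 0 Kc in R^p x R^h (Euclidean norm on the product).\<close>
definition base_step ::
  "(real^'n \<Rightarrow> real^'n) \<Rightarrow> (real^'n \<Rightarrow> real^'m^'n) \<Rightarrow> (real^'n \<Rightarrow> real^'p^'n) \<Rightarrow>
   (real^'n \<Rightarrow> real^'h^'n) \<Rightarrow> real^'p \<Rightarrow> real \<Rightarrow> real \<Rightarrow> real \<Rightarrow> real \<Rightarrow> real^'h \<Rightarrow> (nat \<Rightarrow> real^'n) \<Rightarrow>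
   nat \<Rightarrow> (real^'n) \<times> ((real^'p) \<times> (real^'h)) \<Rightarrow> (real^'n) \<times> ((real^'p) \<times> (real^'h))" where
  "base_step f0 B Y1 Y2 Th KTh Kc C1 C2 cc wi t s =
     (let x = fst s; thh = fst (snd s); ch = snd (snd s);
          u = ce_input B x (Y1 x *v thh + Y2 x *v ch);
          x' = plant_next f0 B Y1 Y2 Th cc (wi t) x u;
          y = observe f0 B x u x';
          eta = 2 * sqrt (KTh\<^sup>2 + Kc\<^sup>2) / (sqrt (C1\<^sup>2 + C2\<^sup>2) * sqrt (real t))
      in (x', closest_point (cball 0 KTh \<times> cball 0 Kc)
                 ((thh, ch) - eta *\<^sub>R (grad_theta Y1 Y2 x y thh ch, grad_c Y1 Y2 x y thh ch))))"

primrec base_env ::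
  "(real^'n \<Rightarrow> real^'n) \<Rightarrow> (real^'n \<Rightarrow> real^'m^'n) \<Rightarrow> (real^'n \<Rightarrow> real^'p^'n) \<Rightarrow>
   (real^'n \<Rightarrow> real^'h^'n) \<Rightarrow> real^'p \<Rightarrow> real \<Rightarrow> real \<Rightarrow> real \<Rightarrow> real \<Rightarrow> real^'h \<Rightarrow> (nat \<Rightarrow> real^'n) \<Rightarrow>
   (real^'p) \<times> (real^'h) \<Rightarrow> nat \<Rightarrow> (real^'n) \<times> ((real^'p) \<times> (real^'h))" where
  "base_env f0 B Y1 Y2 Th KTh Kc C1 C2 cc wi a1 0 = (0, a1)"
| "base_env f0 B Y1 Y2 Th KTh Kc C1 C2 cc wi a1 (Suc k) =
     base_step f0 B Y1 Y2 Th KTh Kc C1 C2 cc wi (Suc k) (base_env f0 B Y1 Y2 Th KTh Kc C1 C2 cc wi a1 k)"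

definition base_x ::
  "(real^'n \<Rightarrow> real^'n) \<Rightarrow> (real^'n \<Rightarrow> real^'m^'n) \<Rightarrow> (real^'n \<Rightarrow> real^'p^'n) \<Rightarrow>
   (real^'n \<Rightarrow> real^'h^'n) \<Rightarrow> real^'p \<Rightarrow> real \<Rightarrow> real \<Rightarrow> real \<Rightarrow> real \<Rightarrow>
   (nat \<Rightarrow> real^'h) \<Rightarrow> (nat \<Rightarrow> nat \<Rightarrow> real^'n) \<Rightarrow> (nat \<Rightarrow> (real^'p) \<times> (real^'h)) \<Rightarrow> nat \<Rightarrow> nat \<Rightarrow> real^'n" where
  "base_x f0 B Y1 Y2 Th KTh Kc C1 C2 c w a1 i t =
     fst (base_env f0 B Y1 Y2 Th KTh Kc C1 C2 (c i) (w i) (a1 i) (t - 1))"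

definition ACE :: "nat \<Rightarrow> nat \<Rightarrow> (nat \<Rightarrow> nat \<Rightarrow> real^'n) \<Rightarrow> real" where
  "ACE N T x = (\<Sum>i = 1..N. \<Sum>t = 1..T. norm (x i t)) / (real T * real N)"

definition eISS :: "(real^'n \<Rightarrow> real^'n) \<Rightarrow> real \<Rightarrow> real \<Rightarrow> real \<Rightarrow> bool" where
  "eISS f0 \<beta> \<gamma> \<rho> \<longleftrightarrow> \<beta> \<ge> 0 \<and> \<gamma> \<ge> 0 \<and> 0 \<le> \<rho> \<and> \<rho> < 1 \<and>
     (\<forall>(xs :: nat \<Rightarrow> real^'n) (v :: nat \<Rightarrow> real^'n).
        (\<forall>k\<ge>1. xs (Suc k) = f0 (xs k) + v k) \<longrightarrow>
        (\<forall>t\<ge>1. norm (xs t) \<le> \<beta> * \<rho> ^ (t - 1) * norm (xs 1)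
                              + \<gamma> * (\<Sum>k = 1..t - 1. \<rho> ^ (t - 1 - k) * norm (v k))))"

end

theory Submission
  imports Defs
begin

lemma pinv_unique:
  fixes A :: "real^'m^'n" and X Y :: "real^'n^'m"
  assumes X: "A ** X ** A = A" "X ** A ** X = X" "transpose (A ** X) = A ** X" "transpose (X ** A) = X ** A"
  and Y: "A ** Y ** A = A" "Y ** A ** Y = Y" "transpose (A ** Y) = A ** Y" "transpose (Y ** A) = Y ** A"
  shows "X = Y"
proof -
  have At1: "transpose A = transpose A ** transpose Y ** transpose A"
    by (metis Y(1) matrix_transpose_mul matrix_mul_assoc)
  have At2: "transpose A = transpose A ** A ** Y"
    by (metis At1 Y(3) matrix_transpose_mul matrix_mul_assoc)
  have "X = X ** transpose (A ** X)" by (metis X(2) X(3) matrix_mul_assoc)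
  also have "\<dots> = X ** transpose X ** transpose A" by (simp add: matrix_transpose_mul matrix_mul_assoc)
  also have "\<dots> = X ** transpose X ** transpose A ** A ** Y" by (metis At2 matrix_mul_assoc)
  also have "\<dots> = X ** transpose (A ** X) ** A ** Y" by (simp add: matrix_transpose_mul matrix_mul_assoc)
  also have "\<dots> = X ** A ** Y" by (metis X(2) X(3) matrix_mul_assoc)
  finally have eX: "X = X ** A ** Y" .
  have At3: "transpose A = transpose A ** transpose X ** transpose A"
    by (metis X(1) matrix_transpose_mul matrix_mul_assoc)
  have At4: "transpose A = X ** A ** transpose A"
    by (metis At3 X(4) matrix_transpose_mul matrix_mul_assoc)
  have "Y = transpose (Y ** A) ** Y" by (metis Y(2) Y(4) matrix_mul_assoc)
  also have "\<dots> = transpose A ** transpose Y ** Y" by (simp add: matrix_transpose_mul matrix_mul_assoc)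
  also have "\<dots> = X ** A ** transpose A ** transpose Y ** Y" by (metis At4 matrix_mul_assoc)
  also have "\<dots> = X ** A ** transpose (Y ** A) ** Y" by (simp add: matrix_transpose_mul matrix_mul_assoc)
  also have "\<dots> = X ** A ** Y" by (metis Y(2) Y(4) matrix_mul_assoc)
  finally show ?thesis using eX by simp
qed

lemma pinv_right:
  fixes B :: "real^'m^'n"
  assumes r: "rank B = CARD('n)"
  shows "B *v (pinv B *v z) = z"
proof -
  have injT: "inj ((*v) (transpose B))"
    using r by (simp add: full_rank_injective[symmetric] rank_transpose)
  define M where "M = B ** transpose B"
  have injM: "inj ((*v) M)"
  proof (rule injI)
    fix a b assume "M *v a = M *v b"
    then have "M *v (a - b) = 0" by (simp add: matrix_vector_mult_diff_distrib)
    then have "(a - b) \<bullet> (M *v (a - b)) = 0" by simp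
    then have "(transpose B *v (a - b)) \<bullet> (transpose B *v (a - b)) = 0"
      unfolding M_def by (metis dot_lmul_matrix matrix_vector_mul_assoc transpose_matrix_vector)
    then have "transpose B *v (a - b) = 0" by simp
    then have "transpose B *v a = transpose B *v b" by (metis eq_iff_diff_eq_0 matrix_vector_mult_diff_distrib)
    then show "a = b" using injT by (meson injD)
  qed
  then obtain Mi where Mi: "Mi ** M = mat 1" using matrix_left_invertible_injective by blast
  then have Mi2: "M ** Mi = mat 1" using matrix_left_right_inverse by blast
  have Msym: "transpose M = M" unfolding M_def by (simp add: matrix_transpose_mul)
  have "transpose Mi ** M = mat 1"
    by (metis Mi2 Msym matrix_transpose_mul transpose_mat)
  then have Misym: "transpose Mi = Mi"
    by (metis Mi2 matrix_mul_assoc matrix_mul_lid matrix_mul_rid)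
  define X where "X = transpose B ** Mi"
  have BX: "B ** X = mat 1" unfolding X_def by (metis M_def Mi2 matrix_mul_assoc)
  have P: "B ** X ** B = B \<and> X ** B ** X = X \<and> transpose (B ** X) = B ** X \<and> transpose (X ** B) = X ** B"
    using BX by (simp add: matrix_mul_assoc[symmetric] matrix_transpose_mul X_def Misym)
  have ex1: "\<exists>!X. B ** X ** B = B \<and> X ** B ** X = X \<and> transpose (B ** X) = B ** X \<and> transpose (X ** B) = X ** B"
    using P pinv_unique[of B] by blast
  have "B ** pinv B ** B = B" unfolding pinv_def using theI'[OF ex1] by blast
  have surj: "surj ((*v) B)" using r full_rank_surjective by blast
  then obtain q where q: "z = B *v q" by blast
  show ?thesis using \<open>B ** pinv B ** B = B\<close> q by (metis matrix_vector_mul_assoc)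
qed

lemma norm_step_sq:
  fixes p q :: "'a::real_inner"
  shows "(norm (p - e *\<^sub>R q))\<^sup>2 = (norm p)\<^sup>2 - 2 * e * (q \<bullet> p) + e\<^sup>2 * (norm q)\<^sup>2"
proof -
  have "(norm (p - e *\<^sub>R q))\<^sup>2 = (norm p)\<^sup>2 + (norm (e *\<^sub>R q))\<^sup>2 - 2 * (p \<bullet> (e *\<^sub>R q))"
    using dot_norm_neg[of p "e *\<^sub>R q"] by simp
  also have "(norm (e *\<^sub>R q))\<^sup>2 = e\<^sup>2 * (norm q)\<^sup>2" by (simp add: power_mult_distrib)
  also have "p \<bullet> (e *\<^sub>R q) = e * (q \<bullet> p)" by (simp add: inner_commute)
  finally show ?thesis by simp
qed
lemma t110:
  fixes e X A G :: real
  assumes "e > 0" "2 * e * X \<le> A + e\<^sup>2 * G\<^sup>2"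
  shows "X \<le> A / (2 * e) + e * G\<^sup>2 / 2"
proof -
  have "X \<le> (A + e\<^sup>2 * G\<^sup>2) / (2 * e)" using assms by (simp add: pos_le_divide_eq mult.commute mult.left_commute)
  also have "\<dots> = A / (2 * e) + e * G\<^sup>2 / 2" using assms(1) by (simp add: add_divide_distrib power2_eq_square)
  finally show ?thesis .
qed
lemma t112:
  fixes R G s D :: real
  assumes "R > 0" "G > 0" "s > 0"
  shows "D / (2 * (2 * R / (G * s))) = D * (G / (4 * R)) * s"
    and "(2 * R / (G * s)) * G\<^sup>2 / 2 = R * G / s"
  using assms by (simp_all add: field_simps power2_eq_square)
lemma t142:
  fixes R G s :: real
  assumes "R > 0"
  shows "(G / (4 * R)) * ((2 * R)\<^sup>2 * s) + R * G * (2 * s) = 3 * R * G * s"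
  using assms by (simp add: field_simps power2_eq_square)

lemma sum_inv_sqrt: "(\<Sum>t=1..T. 1 / sqrt (real t)) \<le> 2 * sqrt (real T)"
proof (induction T)
  case 0 then show ?case by simp
next
  case (Suc T)
  have a: "sqrt (real T) * sqrt (real (Suc T)) \<le> real T + 1/2"
  proof -
    have "sqrt (real T) * sqrt (real (Suc T)) = sqrt (real T * (real T + 1))"
      by (simp add: real_sqrt_mult)
    also have "\<dots> \<le> sqrt ((real T + 1/2)^2)"
      by (rule real_sqrt_le_mono) (simp add: power2_eq_square algebra_simps)
    also have "\<dots> = real T + 1/2" by simp
    finally show ?thesis .
  qed
  have pos: "sqrt (real (Suc T)) > 0" by simp
  have sq: "sqrt (real (Suc T)) * sqrt (real (Suc T)) = real T + 1" by simp
  have "1 / sqrt (real (Suc T)) \<le> 2 * sqrt (real (Suc T)) - 2 * sqrt (real T)"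
  proof -
    have "1 \<le> (2 * sqrt (real (Suc T)) - 2 * sqrt (real T)) * sqrt (real (Suc T))"
      using a sq by (simp add: algebra_simps)
    then show ?thesis using pos by (simp add: divide_le_eq mult.commute)
  qed
  then show ?case using Suc by simp
qed

lemma telescope_sqrt:
  fixes d :: "nat \<Rightarrow> real"
  assumes "\<forall>t\<ge>1. 0 \<le> d t \<and> d t \<le> D"
  shows "(\<Sum>t=1..T. (d t - d (Suc t)) * sqrt (real t)) \<le> D * sqrt (real T) - d (Suc T) * sqrt (real T)"
proof (induction T)
  case 0 then show ?case by simp
next
  case (Suc T)
  have m: "sqrt (real T) \<le> sqrt (real (Suc T))" by simp
  have "d (Suc T) * (sqrt (real (Suc T)) - sqrt (real T)) \<le> D * (sqrt (real (Suc T)) - sqrt (real T))"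
    using assms m by (intro mult_right_mono) auto
  moreover have "0 \<le> d (Suc (Suc T))" using assms by auto
  ultimately show ?case using Suc by (simp add: algebra_simps)
qed

lemma ogd:
  fixes z g :: "nat \<Rightarrow> 'a::{real_inner,heine_borel}"
  assumes S: "convex S" "closed S" "S \<noteq> {}"
    and diam: "\<forall>a\<in>S. \<forall>b\<in>S. norm (a - b) \<le> 2 * R"
    and z1: "z 1 \<in> S"
    and step: "\<forall>t\<ge>1. z (Suc t) = closest_point S (z t - (2 * R / (G * sqrt (real t))) *\<^sub>R g t)"
    and gb: "\<forall>t\<ge>1. norm (g t) \<le> G"
    and zs: "zs \<in> S"
  shows "(\<Sum>t=1..T. g t \<bullet> (z t - zs)) \<le> 3 * R * G * sqrt (real T)"
proof -
  have zin: "z t \<in> S" if "t \<ge> 1" for t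
    using that
  proof (induction t)
    case 0 then show ?case by simp
  next
    case (Suc t)
    show ?case
    proof (cases "t = 0")
      case True then show ?thesis using z1 by simp
    next
      case False
      then have "z (Suc t) = closest_point S (z t - (2 * R / (G * sqrt (real t))) *\<^sub>R g t)"
        using step by simp
      then show ?thesis using closest_point_in_set[OF S(2) S(3)] by simp
    qed
  qed
  have "norm (zs - zs) \<le> 2 * R" using diam zs by blast
  then have R0: "R \<ge> 0" by simp
  have "norm (g 1) \<le> G" using gb by simp
  then have G0: "G \<ge> 0" by (rule order_trans[OF norm_ge_zero])
  show ?thesis
  proof (cases "R = 0 \<or> G = 0")
    case True
    have "g t \<bullet> (z t - zs) = 0" if "t \<in> {1..T}" for t
    proof (cases "G = 0")
      case True then show ?thesis using gb that by auto
    next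
      case False
      then have "R = 0" using \<open>R = 0 \<or> G = 0\<close> by simp
      then have "norm (z t - zs) \<le> 0" using diam zin[of t] zs that by auto
      then have "z t = zs" by simp
      then show ?thesis by simp
    qed
    then show ?thesis using R0 G0 by simp
  next
    case False
    then have Rp: "R > 0" and Gp: "G > 0" using R0 G0 by auto
    define eta where "eta t = 2 * R / (G * sqrt (real t))" for t :: nat
    define d where "d t = (norm (z t - zs))\<^sup>2" for t
    have key: "g t \<bullet> (z t - zs) \<le> (d t - d (Suc t)) * (G / (4 * R)) * sqrt (real t) + R * G / sqrt (real t)"
      if t: "t \<ge> 1" for t
    proof -
      have etap: "eta t > 0" using Rp Gp t by (simp add: eta_def)
      have "d (Suc t) \<le> (norm (z t - eta t *\<^sub>R g t - zs))\<^sup>2"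
      proof -
        have "dist (z (Suc t)) zs \<le> dist (z t - eta t *\<^sub>R g t) zs"
          using closest_point_lipschitz[OF S, of "z t - eta t *\<^sub>R g t" zs] step t zs
            closest_point_self[OF zs] by (simp add: eta_def)
        then show ?thesis unfolding d_def dist_norm by (simp add: power_mono)
      qed
      also have "\<dots> = d t - 2 * eta t * (g t \<bullet> (z t - zs)) + (eta t)\<^sup>2 * (norm (g t))\<^sup>2"
      proof -
        have "z t - eta t *\<^sub>R g t - zs = (z t - zs) - eta t *\<^sub>R g t" by simp
        then show ?thesis unfolding d_def using norm_step_sq[of "z t - zs" "eta t" "g t"] by metis
      qed
      also have "\<dots> \<le> d t - 2 * eta t * (g t \<bullet> (z t - zs)) + (eta t)\<^sup>2 * G\<^sup>2"
        using gb t by (intro add_left_mono mult_left_mono power_mono) auto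
      finally have "2 * eta t * (g t \<bullet> (z t - zs)) \<le> d t - d (Suc t) + (eta t)\<^sup>2 * G\<^sup>2" by simp
      then have "g t \<bullet> (z t - zs) \<le> (d t - d (Suc t)) / (2 * eta t) + eta t * G\<^sup>2 / 2"
        using t110[OF etap] by blast
      also have "(d t - d (Suc t)) / (2 * eta t) = (d t - d (Suc t)) * (G / (4 * R)) * sqrt (real t)"
        using t112(1)[OF Rp Gp, of "sqrt (real t)"] t by (simp add: eta_def)
      also have "eta t * G\<^sup>2 / 2 = R * G / sqrt (real t)"
        using t112(2)[OF Rp Gp, of "sqrt (real t)"] t by (simp add: eta_def)
      finally show ?thesis .
    qed
    have dbd: "\<forall>t\<ge>1. 0 \<le> d t \<and> d t \<le> (2 * R)\<^sup>2"
    proof (intro allI impI conjI)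
      fix t :: nat assume "t \<ge> 1"
      then have "norm (z t - zs) \<le> 2 * R" using diam zin zs by blast
      then show "d t \<le> (2 * R)\<^sup>2" unfolding d_def by (intro power_mono) auto
    qed (simp add: d_def)
    have "(\<Sum>t=1..T. g t \<bullet> (z t - zs)) \<le> (\<Sum>t=1..T. (d t - d (Suc t)) * (G / (4 * R)) * sqrt (real t) + R * G / sqrt (real t))"
      by (rule sum_mono) (use key in auto)
    also have "\<dots> = (G / (4 * R)) * (\<Sum>t=1..T. (d t - d (Suc t)) * sqrt (real t)) + R * G * (\<Sum>t=1..T. 1 / sqrt (real t))"
    proof -
      have "\<And>t. (d t - d (Suc t)) * (G / (4 * R)) * sqrt (real t) + R * G / sqrt (real t)
          = (G / (4 * R)) * ((d t - d (Suc t)) * sqrt (real t)) + R * G * (1 / sqrt (real t))"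
        by simp
      then show ?thesis by (simp only: sum.distrib sum_distrib_left)
    qed
    also have "\<dots> \<le> (G / (4 * R)) * ((2 * R)\<^sup>2 * sqrt (real T)) + R * G * (2 * sqrt (real T))"
    proof (rule add_mono)
      have "(\<Sum>t=1..T. (d t - d (Suc t)) * sqrt (real t)) \<le> (2 * R)\<^sup>2 * sqrt (real T)"
      proof -
        have "0 \<le> d (Suc T) * sqrt (real T)" using dbd by simp
        then show ?thesis using telescope_sqrt[OF dbd, of T] by linarith
      qed
      then show "(G / (4 * R)) * (\<Sum>t=1..T. (d t - d (Suc t)) * sqrt (real t)) \<le> (G / (4 * R)) * ((2 * R)\<^sup>2 * sqrt (real T))"
        using Rp Gp by (intro mult_left_mono) auto
      show "R * G * (\<Sum>t=1..T. 1 / sqrt (real t)) \<le> R * G * (2 * sqrt (real T))"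
        using Rp Gp sum_inv_sqrt by (intro mult_left_mono) auto
    qed
    also have "\<dots> = 3 * R * G * sqrt (real T)"
      using Rp by (rule t142)
    finally show ?thesis .
  qed
qed

lemma specnorm_nonneg: "specnorm (A :: real^'a^'b) \<ge> 0"
  unfolding specnorm_def by (rule onorm_pos_le) (rule matrix_vector_mul_bounded_linear)

lemma mat_bd:
  fixes A :: "real^'a^'b"
  assumes "specnorm A \<le> K"
  shows "norm (A *v v) \<le> K * norm v"
proof -
  have "norm (A *v v) \<le> specnorm A * norm v"
    unfolding specnorm_def using onorm[OF matrix_vector_mul_bounded_linear[of A]] by simp
  also have "\<dots> \<le> K * norm v" using assms by (simp add: mult_right_mono)
  finally show ?thesis .
qed

lemma matT_bd:
  fixes A :: "real^'a^'b"
  assumes "specnorm A \<le> K"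
  shows "norm (transpose A *v r) \<le> K * norm r"
proof -
  define q where "q = transpose A *v r"
  have K0: "K \<ge> 0" using assms specnorm_nonneg[of A] by linarith
  have "(norm q)\<^sup>2 = q \<bullet> q" by (simp add: power2_norm_eq_inner)
  also have "\<dots> = r \<bullet> (A *v q)" unfolding q_def by (simp add: dot_lmul_matrix)
  also have "\<dots> \<le> norm r * norm (A *v q)" by (rule norm_cauchy_schwarz)
  also have "\<dots> \<le> norm r * (K * norm q)" using mat_bd[OF assms] by (simp add: mult_left_mono)
  finally have h: "(norm q)\<^sup>2 \<le> K * norm r * norm q" by (simp add: algebra_simps)
  show ?thesis
  proof (cases "norm q = 0")
    case True then show ?thesis using K0 q_def by simp
  next
    case False
    then have "norm q > 0" by simp
    then show ?thesis using h unfolding q_def[symmetric] by (simp add: power2_eq_square)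
  qed
qed

lemma plant_ce:
  fixes B :: "real^'n \<Rightarrow> real^'m^'n"
  assumes "rank (B x) = CARD('n)"
  shows "plant_next f0 B Y1 Y2 Th cc wv x (ce_input B x fh) = f0 x + (fh - model Y1 Y2 x Th cc + wv)"
  unfolding plant_next_def ce_input_def using pinv_right[OF assms] by simp

lemma pointwise:
  fixes Y1 :: "real^'n \<Rightarrow> real^'p^'n" and Y2 :: "real^'n \<Rightarrow> real^'h^'n"
    and f0 :: "real^'n \<Rightarrow> real^'n" and B :: "real^'n \<Rightarrow> real^'m^'n" and u :: "real^'m"
  assumes Y1b: "specnorm (Y1 x) \<le> K1" and Y2b: "specnorm (Y2 x) \<le> K2"
    and thb: "norm thh \<le> KTh" and Thb: "norm Th \<le> KTh" and chb: "norm ch \<le> Kc" and ccb: "norm cc \<le> Kc"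
    and wb: "norm wv \<le> W"
    and C1_def: "C1 = 4 * K1\<^sup>2 * KTh + 4 * K1 * K2 * Kc + 2 * K1 * W"
    and C2_def: "C2 = 4 * K2\<^sup>2 * Kc + 4 * K1 * K2 * KTh + 2 * K2 * W"
  defines "y \<equiv> observe f0 B x u (plant_next f0 B Y1 Y2 Th cc wv x u)"
  shows "Y1 x *v thh + Y2 x *v ch - y = Y1 x *v thh + Y2 x *v ch - model Y1 Y2 x Th cc + wv"
    and "norm (grad_theta Y1 Y2 x y thh ch) \<le> C1"
    and "norm (grad_c Y1 Y2 x y thh ch) \<le> C2"
    and "(norm (Y1 x *v thh + Y2 x *v ch - y))\<^sup>2
           \<le> W\<^sup>2 + grad_theta Y1 Y2 x y thh ch \<bullet> (thh - Th) + grad_c Y1 Y2 x y thh ch \<bullet> (ch - cc)"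
proof -
  have yeq: "y = model Y1 Y2 x Th cc - wv"
    unfolding y_def observe_def plant_next_def by simp
  show req: "Y1 x *v thh + Y2 x *v ch - y = Y1 x *v thh + Y2 x *v ch - model Y1 Y2 x Th cc + wv"
    using yeq by simp
  define r where "r = Y1 x *v thh + Y2 x *v ch - y"
  have K1p: "K1 \<ge> 0" using Y1b specnorm_nonneg[of "Y1 x"] by linarith
  have K2p: "K2 \<ge> 0" using Y2b specnorm_nonneg[of "Y2 x"] by linarith
  have rr: "r = Y1 x *v thh + Y2 x *v ch - Y1 x *v Th - Y2 x *v cc + wv"
    unfolding r_def yeq model_def by simp
  have "norm r \<le> norm (Y1 x *v thh) + norm (Y2 x *v ch) + norm (Y1 x *v Th) + norm (Y2 x *v cc) + norm wv"
    unfolding rr by (smt (verit) norm_triangle_ineq norm_triangle_ineq4)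
  also have "\<dots> \<le> K1 * KTh + K2 * Kc + K1 * KTh + K2 * Kc + W"
  proof -
    have "norm (Y1 x *v thh) \<le> K1 * KTh"
      using mat_bd[OF Y1b, of thh] thb K1p by (meson mult_left_mono order_trans)
    moreover have "norm (Y1 x *v Th) \<le> K1 * KTh"
      using mat_bd[OF Y1b, of Th] Thb K1p by (meson mult_left_mono order_trans)
    moreover have "norm (Y2 x *v ch) \<le> K2 * Kc"
      using mat_bd[OF Y2b, of ch] chb K2p by (meson mult_left_mono order_trans)
    moreover have "norm (Y2 x *v cc) \<le> K2 * Kc"
      using mat_bd[OF Y2b, of cc] ccb K2p by (meson mult_left_mono order_trans)
    ultimately show ?thesis using wb by linarith
  qed
  finally have rb: "norm r \<le> 2 * K1 * KTh + 2 * K2 * Kc + W" by simp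
  have "norm (grad_theta Y1 Y2 x y thh ch) = 2 * norm (transpose (Y1 x) *v r)"
    unfolding grad_theta_def r_def by simp
  also have "\<dots> \<le> 2 * (K1 * norm r)" using matT_bd[OF Y1b, of r] by simp
  also have "\<dots> \<le> 2 * (K1 * (2 * K1 * KTh + 2 * K2 * Kc + W))"
    using rb K1p by (simp add: mult_left_mono)
  also have "\<dots> = C1" unfolding C1_def by (simp add: algebra_simps power2_eq_square)
  finally show "norm (grad_theta Y1 Y2 x y thh ch) \<le> C1" .
  have "norm (grad_c Y1 Y2 x y thh ch) = 2 * norm (transpose (Y2 x) *v r)"
    unfolding grad_c_def r_def by simp
  also have "\<dots> \<le> 2 * (K2 * norm r)" using matT_bd[OF Y2b, of r] by simp
  also have "\<dots> \<le> 2 * (K2 * (2 * K1 * KTh + 2 * K2 * Kc + W))"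
    using rb K2p by (simp add: mult_left_mono)
  also have "\<dots> = C2" unfolding C2_def by (simp add: algebra_simps power2_eq_square)
  finally show "norm (grad_c Y1 Y2 x y thh ch) \<le> C2" .
  have g1: "grad_theta Y1 Y2 x y thh ch \<bullet> (thh - Th) = 2 * (r \<bullet> (Y1 x *v (thh - Th)))"
    unfolding grad_theta_def r_def by (simp add: dot_lmul_matrix)
  have g2: "grad_c Y1 Y2 x y thh ch \<bullet> (ch - cc) = 2 * (r \<bullet> (Y2 x *v (ch - cc)))"
    unfolding grad_c_def r_def by (simp add: dot_lmul_matrix)
  have "Y1 x *v (thh - Th) + Y2 x *v (ch - cc) = r - wv"
    unfolding rr by (simp add: matrix_vector_mult_diff_distrib)
  then have gsum: "grad_theta Y1 Y2 x y thh ch \<bullet> (thh - Th) + grad_c Y1 Y2 x y thh ch \<bullet> (ch - cc)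
      = 2 * (r \<bullet> r) - 2 * (r \<bullet> wv)"
    unfolding g1 g2 by (metis distrib_left inner_add_right inner_diff_right right_diff_distrib)
  have "0 \<le> (norm (r - wv))\<^sup>2" by simp
  also have "(norm (r - wv))\<^sup>2 = r \<bullet> r - 2 * (r \<bullet> wv) + wv \<bullet> wv"
    by (simp add: power2_norm_eq_inner inner_diff_left inner_diff_right inner_commute)
  finally have "0 \<le> r \<bullet> r - 2 * (r \<bullet> wv) + wv \<bullet> wv" .
  moreover have "wv \<bullet> wv \<le> W\<^sup>2"
    using wb by (simp add: power2_norm_eq_inner[symmetric] power_mono)
  ultimately have "(norm r)\<^sup>2 \<le> W\<^sup>2 + (2 * (r \<bullet> r) - 2 * (r \<bullet> wv))"
    by (simp add: power2_norm_eq_inner)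
  then show "(norm (Y1 x *v thh + Y2 x *v ch - y))\<^sup>2
           \<le> W\<^sup>2 + grad_theta Y1 Y2 x y thh ch \<bullet> (thh - Th) + grad_c Y1 Y2 x y thh ch \<bullet> (ch - cc)"
    using gsum unfolding r_def by simp
qed

lemma geo_double:
  fixes a :: "nat \<Rightarrow> real"
  assumes "0 \<le> \<rho>" "\<rho> < 1" "\<forall>k. 0 \<le> a k"
  shows "(\<Sum>t=1..T. \<Sum>k=1..t-1. \<rho> ^ (t - 1 - k) * a k) \<le> (\<Sum>k=1..T. a k) / (1 - \<rho>)"
proof -
  define S where "S T = (\<Sum>t=1..T. \<Sum>k=1..t-1. \<rho> ^ (t - 1 - k) * a k)" for T
  define I where "I T = (\<Sum>k=1..T. \<rho> ^ (T - k) * a k)" for T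
  have eq: "(1 - \<rho>) * S T + I T = (\<Sum>k=1..T. a k)" for T
  proof (induction T)
    case 0 then show ?case by (simp add: S_def I_def)
  next
    case (Suc T)
    have S1: "S (Suc T) = S T + I T" by (simp add: S_def I_def)
    have "I (Suc T) = (\<Sum>k=1..T. \<rho> ^ (Suc T - k) * a k) + a (Suc T)" by (simp add: I_def)
    also have "(\<Sum>k=1..T. \<rho> ^ (Suc T - k) * a k) = \<rho> * I T"
      unfolding I_def sum_distrib_left
      by (rule sum.cong) (auto simp: Suc_diff_le)
    finally have I1: "I (Suc T) = \<rho> * I T + a (Suc T)" .
    have "(1 - \<rho>) * S (Suc T) + I (Suc T) = ((1 - \<rho>) * S T + I T) + a (Suc T)"
      unfolding S1 I1 by (simp add: algebra_simps)
    then show ?case using Suc.IH by simp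
  qed
  have "I T \<ge> 0" unfolding I_def using assms by (intro sum_nonneg) simp
  then have "(1 - \<rho>) * S T \<le> (\<Sum>k=1..T. a k)" using eq[of T] by linarith
  then show ?thesis using assms unfolding S_def by (simp add: pos_le_divide_eq mult.commute)
qed

lemma traj:
  fixes X r :: "nat \<Rightarrow> real^'n"
  assumes iss: "eISS f0 \<beta> \<gamma> \<rho>" and X1: "X 1 = 0"
    and dyn: "\<forall>t\<ge>1. X (Suc t) = f0 (X t) + r t"
  shows "(\<Sum>t=1..T. norm (X t)) \<le> \<gamma> / (1 - \<rho>) * (\<Sum>t=1..T. norm (r t))"
proof -
  have p: "\<gamma> \<ge> 0" "0 \<le> \<rho>" "\<rho> < 1" using iss by (auto simp: eISS_def)
  have b: "norm (X t) \<le> \<gamma> * (\<Sum>k=1..t-1. \<rho> ^ (t - 1 - k) * norm (r k))" if "t \<ge> 1" for t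
  proof -
    have "\<forall>t\<ge>1. norm (X t) \<le> \<beta> * \<rho> ^ (t - 1) * norm (X 1) + \<gamma> * (\<Sum>k=1..t-1. \<rho> ^ (t - 1 - k) * norm (r k))"
      using iss dyn unfolding eISS_def by blast
    then show ?thesis using that X1 by simp
  qed
  have "(\<Sum>t=1..T. norm (X t)) \<le> (\<Sum>t=1..T. \<gamma> * (\<Sum>k=1..t-1. \<rho> ^ (t - 1 - k) * norm (r k)))"
    by (rule sum_mono) (use b in auto)
  also have "\<dots> = \<gamma> * (\<Sum>t=1..T. \<Sum>k=1..t-1. \<rho> ^ (t - 1 - k) * norm (r k))"
    by (simp add: sum_distrib_left)
  also have "\<dots> \<le> \<gamma> * ((\<Sum>k=1..T. norm (r k)) / (1 - \<rho>))"
    using geo_double[of \<rho> "\<lambda>k. norm (r k)" T] p by (intro mult_left_mono) auto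
  finally show ?thesis by simp
qed

lemma combine:
  fixes x :: "nat \<Rightarrow> nat \<Rightarrow> real^'n"
  assumes hb: "\<forall>i\<in>{1..N}. \<exists>b. (\<forall>t. 0 \<le> b t) \<and> (\<Sum>t=1..T. norm (x i t)) \<le> \<Gamma> * (\<Sum>t=1..T. b t)
                 \<and> (\<Sum>t=1..T. (b t)\<^sup>2) \<le> Q i"
    and hQ: "(\<Sum>i=1..N. Q i) \<le> real N * real T * E"
    and G0: "\<Gamma> \<ge> 0" and N: "N \<ge> 1" and T: "T \<ge> 1"
  shows "ACE N T x \<le> \<Gamma> * sqrt E"
proof -
  obtain bb where bb: "\<forall>i\<in>{1..N}. (\<forall>t. 0 \<le> bb i t) \<and> (\<Sum>t=1..T. norm (x i t)) \<le> \<Gamma> * (\<Sum>t=1..T. bb i t)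
                 \<and> (\<Sum>t=1..T. (bb i t)\<^sup>2) \<le> Q i"
    using bchoice[OF hb] by blast
  define P where "P = {1..N} \<times> {1..T}"
  have cP: "card P = N * T" unfolding P_def by (simp add: card_cartesian_product)
  have s1: "(\<Sum>i=1..N. \<Sum>t=1..T. norm (x i t)) \<le> \<Gamma> * (\<Sum>i=1..N. \<Sum>t=1..T. bb i t)"
  proof -
    have "(\<Sum>i=1..N. \<Sum>t=1..T. norm (x i t)) \<le> (\<Sum>i=1..N. \<Gamma> * (\<Sum>t=1..T. bb i t))"
      by (rule sum_mono) (use bb in blast)
    then show ?thesis by (simp add: sum_distrib_left)
  qed
  have e1: "(\<Sum>i=1..N. \<Sum>t=1..T. bb i t) = (\<Sum>p\<in>P. bb (fst p) (snd p))"
    unfolding P_def by (simp add: sum.cartesian_product split_def)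
  have e2: "(\<Sum>i=1..N. \<Sum>t=1..T. (bb i t)\<^sup>2) = (\<Sum>p\<in>P. (bb (fst p) (snd p))\<^sup>2)"
    unfolding P_def by (simp add: sum.cartesian_product split_def)
  have "(\<Sum>p\<in>P. 1 * bb (fst p) (snd p))\<^sup>2 \<le> (\<Sum>p\<in>P. 1\<^sup>2) * (\<Sum>p\<in>P. (bb (fst p) (snd p))\<^sup>2)"
    by (rule Cauchy_Schwarz_ineq_sum)
  then have cs: "(\<Sum>i=1..N. \<Sum>t=1..T. bb i t)\<^sup>2 \<le> real (N * T) * (\<Sum>i=1..N. \<Sum>t=1..T. (bb i t)\<^sup>2)"
    unfolding e1 e2 using cP by simp
  have "(\<Sum>i=1..N. \<Sum>t=1..T. (bb i t)\<^sup>2) \<le> (\<Sum>i=1..N. Q i)"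
    by (rule sum_mono) (use bb in auto)
  also have "\<dots> \<le> real N * real T * E" by (rule hQ)
  finally have "(\<Sum>i=1..N. \<Sum>t=1..T. bb i t)\<^sup>2 \<le> (real N * real T)\<^sup>2 * E"
    using cs by (smt (verit, ccfv_SIG) mult_left_mono of_nat_0_le_iff of_nat_mult power2_eq_square mult.assoc)
  then have "sqrt ((\<Sum>i=1..N. \<Sum>t=1..T. bb i t)\<^sup>2) \<le> sqrt ((real N * real T)\<^sup>2 * E)"
    by (rule real_sqrt_le_mono)
  moreover have "(\<Sum>i=1..N. \<Sum>t=1..T. bb i t) \<ge> 0" using bb by (intro sum_nonneg) auto
  ultimately have s2: "(\<Sum>i=1..N. \<Sum>t=1..T. bb i t) \<le> real N * real T * sqrt E"
    by (simp add: real_sqrt_mult)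
  have NT: "real T * real N > 0" using N T by simp
  have "(\<Sum>i=1..N. \<Sum>t=1..T. norm (x i t)) \<le> \<Gamma> * (real N * real T * sqrt E)"
    using s1 s2 G0 by (meson mult_left_mono order_trans)
  then show ?thesis unfolding ACE_def using NT by (simp add: divide_le_eq algebra_simps)
qed

lemma ball_diam: "\<forall>a\<in>cball (0::'a::real_normed_vector) K. \<forall>b\<in>cball 0 K. norm (a - b) \<le> 2 * K"
proof (intro ballI)
  fix a b :: 'a assume "a \<in> cball 0 K" "b \<in> cball 0 K"
  then have "norm a \<le> K" "norm b \<le> K" by auto
  then show "norm (a - b) \<le> 2 * K" using norm_triangle_ineq4[of a b] by linarith
qed

lemma omac_env_bound:
  fixes f0 :: "real^'n \<Rightarrow> real^'n"
    and B :: "real^'n \<Rightarrow> real^'m^'n"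
    and Y1 :: "real^'n \<Rightarrow> real^'p^'n"
    and Y2 :: "real^'n \<Rightarrow> real^'h^'n"
    and Th :: "real^'p" and cc :: "real^'h" and wi :: "nat \<Rightarrow> real^'n"
    and thh :: "real^'p" and ch1 :: "real^'h"
  assumes full_act: "\<forall>x. rank (B x) = CARD('n)"
    and iss: "eISS f0 \<beta> \<gamma> \<rho>"
    and wb: "\<forall>t. norm (wi t) \<le> W"
    and Y1_bd: "\<forall>x. specnorm (Y1 x) \<le> K1"
    and Y2_bd: "\<forall>x. specnorm (Y2 x) \<le> K2"
    and Th_bd: "norm Th \<le> KTh"
    and ccb: "norm cc \<le> Kc"
    and C1_def: "C1 = 4 * K1\<^sup>2 * KTh + 4 * K1 * K2 * Kc + 2 * K1 * W"
    and C2_def: "C2 = 4 * K2\<^sup>2 * Kc + 4 * K1 * K2 * KTh + 2 * K2 * W"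
    and thb: "norm thh \<le> KTh" and ch1b: "norm ch1 \<le> Kc"
  shows "\<exists>b. (\<forall>t. 0 \<le> b t)
           \<and> (\<Sum>t=1..T. norm (fst (omac_env f0 B Y1 Y2 Th Kc C2 cc wi thh ch1 (t - 1))))
                \<le> \<gamma> / (1 - \<rho>) * (\<Sum>t=1..T. b t)
           \<and> (\<Sum>t=1..T. (b t)\<^sup>2) \<le> real T * W\<^sup>2
                + omac_outer_grad f0 B Y1 Y2 Th Kc C2 cc wi thh ch1 T \<bullet> (thh - Th)
                + 3 * Kc * C2 * sqrt (real T)"
    and "norm (omac_outer_grad f0 B Y1 Y2 Th Kc C2 cc wi thh ch1 T) \<le> real T * C1"
proof -
  define s where "s k = omac_env f0 B Y1 Y2 Th Kc C2 cc wi thh ch1 k" for k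
  define X where "X t = fst (s (t - 1))" for t
  define CH where "CH t = snd (s (t - 1))" for t
  define U where "U t = ce_input B (X t) (Y1 (X t) *v thh + Y2 (X t) *v CH t)" for t
  define Yo where "Yo t = observe f0 B (X t) (U t) (plant_next f0 B Y1 Y2 Th cc (wi t) (X t) (U t))" for t
  define r where "r t = Y1 (X t) *v thh + Y2 (X t) *v CH t - Yo t" for t
  define gth where "gth t = grad_theta Y1 Y2 (X t) (Yo t) thh (CH t)" for t
  define gc where "gc t = grad_c Y1 Y2 (X t) (Yo t) thh (CH t)" for t
  have Kc0: "Kc \<ge> 0" using ch1b norm_ge_zero order_trans by blast
  have sstep: "s t = (plant_next f0 B Y1 Y2 Th cc (wi t) (X t) (U t),
                      projball Kc (CH t - (2 * Kc / (C2 * sqrt (real t))) *\<^sub>R gc t))"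
    if t: "t \<ge> 1" for t
  proof -
    obtain k where k: "t = Suc k" using t by (cases t) auto
    have "s t = omac_step f0 B Y1 Y2 Th Kc C2 cc wi thh t (s (t - 1))"
      unfolding k s_def by simp
    then show ?thesis
      by (simp add: omac_step_def Let_def X_def CH_def U_def Yo_def gc_def)
  qed
  have CHin: "CH t \<in> cball 0 Kc" if "t \<ge> 1" for t
  proof (cases "t = 1")
    case True then show ?thesis using ch1b by (simp add: CH_def s_def)
  next
    case False
    then have "t - 1 \<ge> 1" using that by simp
    have "CH t = snd (s (t - 1))" by (simp add: CH_def)
    then have "CH t = projball Kc (CH (t - 1) - (2 * Kc / (C2 * sqrt (real (t - 1)))) *\<^sub>R gc (t - 1))"
      using sstep[OF \<open>t - 1 \<ge> 1\<close>] by simp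
    then show ?thesis unfolding projball_def using closest_point_in_set[of "cball 0 Kc"] Kc0 by simp
  qed
  have pw: "norm (gth t) \<le> C1 \<and> norm (gc t) \<le> C2 \<and>
            (norm (r t))\<^sup>2 \<le> W\<^sup>2 + gth t \<bullet> (thh - Th) + gc t \<bullet> (CH t - cc) \<and>
            r t = Y1 (X t) *v thh + Y2 (X t) *v CH t - model Y1 Y2 (X t) Th cc + wi t"
    if t: "t \<ge> 1" for t
    using pointwise[of Y1 "X t" K1 Y2 K2 thh KTh Th "CH t" Kc cc "wi t" W C1 C2 f0 B "U t"]
      Y1_bd Y2_bd thb Th_bd CHin[OF t] ccb wb C1_def C2_def
    unfolding gth_def gc_def r_def Yo_def by auto
  have dyn: "\<forall>t\<ge>1. X (Suc t) = f0 (X t) + r t"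
  proof (intro allI impI)
    fix t :: nat assume t: "t \<ge> 1"
    have "X (Suc t) = plant_next f0 B Y1 Y2 Th cc (wi t) (X t) (U t)"
      using sstep[OF t] by (simp add: X_def)
    also have "\<dots> = f0 (X t) + (Y1 (X t) *v thh + Y2 (X t) *v CH t - model Y1 Y2 (X t) Th cc + wi t)"
      unfolding U_def using plant_ce[of B "X t" f0 Y1 Y2 Th cc "wi t"] full_act by simp
    also have "\<dots> = f0 (X t) + r t" using pw[OF t] by simp
    finally show "X (Suc t) = f0 (X t) + r t" .
  qed
  have X1: "X 1 = 0" by (simp add: X_def s_def)
  have tr: "(\<Sum>t=1..T. norm (X t)) \<le> \<gamma> / (1 - \<rho>) * (\<Sum>t=1..T. norm (r t))"
    by (rule traj[OF iss X1 dyn])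
  have og: "omac_outer_grad f0 B Y1 Y2 Th Kc C2 cc wi thh ch1 T = (\<Sum>t=1..T. gth t)"
    unfolding omac_outer_grad_def
  proof (rule sum.cong)
    fix t assume "t \<in> {1..T}"
    then have t: "t \<ge> 1" by simp
    have "fst (omac_env f0 B Y1 Y2 Th Kc C2 cc wi thh ch1 t) = plant_next f0 B Y1 Y2 Th cc (wi t) (X t) (U t)"
      using sstep[OF t] by (simp add: s_def)
    then show "(let s = omac_env f0 B Y1 Y2 Th Kc C2 cc wi thh ch1 (t - 1); x = fst s; ch = snd s;
            u = ce_input B x (Y1 x *v thh + Y2 x *v ch);
            x' = fst (omac_env f0 B Y1 Y2 Th Kc C2 cc wi thh ch1 t);
            y = observe f0 B x u x'
        in grad_theta Y1 Y2 x y thh ch) = gth t"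
      by (simp add: Let_def gth_def Yo_def U_def X_def CH_def s_def)
  qed simp
  have ogd_c: "(\<Sum>t=1..T. gc t \<bullet> (CH t - cc)) \<le> 3 * Kc * C2 * sqrt (real T)"
  proof (rule ogd[where S = "cball 0 Kc"])
    show "convex (cball (0::real^'h) Kc)" by simp
    show "closed (cball (0::real^'h) Kc)" by simp
    show "cball (0::real^'h) Kc \<noteq> {}" using Kc0 by simp
    show "\<forall>a\<in>cball 0 Kc. \<forall>b\<in>cball 0 Kc. norm (a - b) \<le> 2 * Kc" by (rule ball_diam)
    show "CH 1 \<in> cball 0 Kc" using CHin by simp
    show "\<forall>t\<ge>1. CH (Suc t) = closest_point (cball 0 Kc) (CH t - (2 * Kc / (C2 * sqrt (real t))) *\<^sub>R gc t)"
      using sstep by (simp add: CH_def projball_def)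
    show "\<forall>t\<ge>1. norm (gc t) \<le> C2" using pw by blast
    show "cc \<in> cball 0 Kc" using ccb by simp
  qed
  show "\<exists>b. (\<forall>t. 0 \<le> b t)
           \<and> (\<Sum>t=1..T. norm (fst (omac_env f0 B Y1 Y2 Th Kc C2 cc wi thh ch1 (t - 1))))
                \<le> \<gamma> / (1 - \<rho>) * (\<Sum>t=1..T. b t)
           \<and> (\<Sum>t=1..T. (b t)\<^sup>2) \<le> real T * W\<^sup>2
                + omac_outer_grad f0 B Y1 Y2 Th Kc C2 cc wi thh ch1 T \<bullet> (thh - Th)
                + 3 * Kc * C2 * sqrt (real T)"
  proof (intro exI conjI)
    show "\<forall>t. 0 \<le> norm (r t)" by simp
    show "(\<Sum>t=1..T. norm (fst (omac_env f0 B Y1 Y2 Th Kc C2 cc wi thh ch1 (t - 1))))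
                \<le> \<gamma> / (1 - \<rho>) * (\<Sum>t=1..T. norm (r t))"
      using tr by (simp add: X_def s_def)
    have "(\<Sum>t=1..T. (norm (r t))\<^sup>2) \<le> (\<Sum>t=1..T. W\<^sup>2 + gth t \<bullet> (thh - Th) + gc t \<bullet> (CH t - cc))"
    proof (rule sum_mono)
      fix t assume "t \<in> {1..T}"
      then have t: "t \<ge> 1" by simp
      show "(norm (r t))\<^sup>2 \<le> W\<^sup>2 + gth t \<bullet> (thh - Th) + gc t \<bullet> (CH t - cc)"
        using pw[OF t] by (elim conjE)
    qed
    also have "\<dots> = real T * W\<^sup>2 + (\<Sum>t=1..T. gth t) \<bullet> (thh - Th) + (\<Sum>t=1..T. gc t \<bullet> (CH t - cc))"
      by (simp add: sum.distrib inner_sum_left)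
    also have "\<dots> \<le> real T * W\<^sup>2 + (\<Sum>t=1..T. gth t) \<bullet> (thh - Th) + 3 * Kc * C2 * sqrt (real T)"
      using ogd_c by simp
    finally show "(\<Sum>t=1..T. (norm (r t))\<^sup>2) \<le> real T * W\<^sup>2
                + omac_outer_grad f0 B Y1 Y2 Th Kc C2 cc wi thh ch1 T \<bullet> (thh - Th)
                + 3 * Kc * C2 * sqrt (real T)" unfolding og .
  qed
  have "norm (\<Sum>t=1..T. gth t) \<le> (\<Sum>t=1..T. norm (gth t))" by (rule norm_sum)
  also have "\<dots> \<le> (\<Sum>t=1..T. C1)" by (rule sum_mono) (use pw in auto)
  finally show "norm (omac_outer_grad f0 B Y1 Y2 Th Kc C2 cc wi thh ch1 T) \<le> real T * C1"
    unfolding og by simp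
qed

lemma base_env_bound:
  fixes f0 :: "real^'n \<Rightarrow> real^'n"
    and B :: "real^'n \<Rightarrow> real^'m^'n"
    and Y1 :: "real^'n \<Rightarrow> real^'p^'n"
    and Y2 :: "real^'n \<Rightarrow> real^'h^'n"
    and Th :: "real^'p" and cc :: "real^'h" and wi :: "nat \<Rightarrow> real^'n"
    and a1 :: "(real^'p) \<times> (real^'h)"
  assumes full_act: "\<forall>x. rank (B x) = CARD('n)"
    and iss: "eISS f0 \<beta> \<gamma> \<rho>"
    and wb: "\<forall>t. norm (wi t) \<le> W"
    and Y1_bd: "\<forall>x. specnorm (Y1 x) \<le> K1"
    and Y2_bd: "\<forall>x. specnorm (Y2 x) \<le> K2"
    and Th_bd: "norm Th \<le> KTh"
    and ccb: "norm cc \<le> Kc"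
    and C1_def: "C1 = 4 * K1\<^sup>2 * KTh + 4 * K1 * K2 * Kc + 2 * K1 * W"
    and C2_def: "C2 = 4 * K2\<^sup>2 * Kc + 4 * K1 * K2 * KTh + 2 * K2 * W"
    and a1b: "norm (fst a1) \<le> KTh \<and> norm (snd a1) \<le> Kc"
  shows "\<exists>b. (\<forall>t. 0 \<le> b t)
           \<and> (\<Sum>t=1..T. norm (fst (base_env f0 B Y1 Y2 Th KTh Kc C1 C2 cc wi a1 (t - 1))))
                \<le> \<gamma> / (1 - \<rho>) * (\<Sum>t=1..T. b t)
           \<and> (\<Sum>t=1..T. (b t)\<^sup>2) \<le> real T * W\<^sup>2
                + 3 * sqrt (KTh\<^sup>2 + Kc\<^sup>2) * sqrt (C1\<^sup>2 + C2\<^sup>2) * sqrt (real T)"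
proof -
  define S :: "((real^'p) \<times> (real^'h)) set" where "S = cball 0 KTh \<times> cball 0 Kc"
  define R where "R = sqrt (KTh\<^sup>2 + Kc\<^sup>2)"
  define G where "G = sqrt (C1\<^sup>2 + C2\<^sup>2)"
  define s where "s k = base_env f0 B Y1 Y2 Th KTh Kc C1 C2 cc wi a1 k" for k
  define X where "X t = fst (s (t - 1))" for t
  define A where "A t = snd (s (t - 1))" for t
  define TH where "TH t = fst (A t)" for t
  define CH where "CH t = snd (A t)" for t
  define U where "U t = ce_input B (X t) (Y1 (X t) *v TH t + Y2 (X t) *v CH t)" for t
  define Yo where "Yo t = observe f0 B (X t) (U t) (plant_next f0 B Y1 Y2 Th cc (wi t) (X t) (U t))" for t
  define r where "r t = Y1 (X t) *v TH t + Y2 (X t) *v CH t - Yo t" for t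
  define gth where "gth t = grad_theta Y1 Y2 (X t) (Yo t) (TH t) (CH t)" for t
  define gc where "gc t = grad_c Y1 Y2 (X t) (Yo t) (TH t) (CH t)" for t
  define g where "g t = (gth t, gc t)" for t
  have Kc0: "Kc \<ge> 0" using ccb norm_ge_zero order_trans by blast
  have KTh0: "KTh \<ge> 0" using Th_bd norm_ge_zero order_trans by blast
  have Sne: "S \<noteq> {}" using Kc0 KTh0 by (simp add: S_def)
  have Scl: "closed S" by (simp add: S_def closed_Times)
  have Scv: "convex S" by (simp add: S_def convex_Times)
  have sstep0: "s t = (plant_next f0 B Y1 Y2 Th cc (wi t) (X t) (U t),
                      closest_point S ((TH t, CH t) - (2 * R / (G * sqrt (real t))) *\<^sub>R g t))"
    if t: "t \<ge> 1" for t
  proof -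
    obtain k where k: "t = Suc k" using t by (cases t) auto
    have "s t = base_step f0 B Y1 Y2 Th KTh Kc C1 C2 cc wi t (s (t - 1))"
      unfolding k s_def by simp
    then show ?thesis unfolding base_step_def Let_def
      by (simp only: X_def[symmetric] A_def[symmetric] TH_def[symmetric] CH_def[symmetric]
          U_def[symmetric] Yo_def[symmetric] gth_def[symmetric] gc_def[symmetric] g_def[symmetric]
          S_def[symmetric] R_def[symmetric] G_def[symmetric])
  qed
  have sstep: "s t = (plant_next f0 B Y1 Y2 Th cc (wi t) (X t) (U t),
                      closest_point S (A t - (2 * R / (G * sqrt (real t))) *\<^sub>R g t))"
    if t: "t \<ge> 1" for t
  proof -
    have "(TH t, CH t) = A t" by (simp add: TH_def CH_def)
    then show ?thesis using sstep0[OF t] by simp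
  qed
  have Ain: "A t \<in> S" if "t \<ge> 1" for t
  proof (cases "t = 1")
    case True then show ?thesis using a1b by (simp add: A_def s_def S_def mem_Times_iff)
  next
    case False
    then have "t - 1 \<ge> 1" using that by simp
    have "A t = snd (s (t - 1))" by (simp add: A_def)
    then have "A t = closest_point S (A (t - 1) - (2 * R / (G * sqrt (real (t - 1)))) *\<^sub>R g (t - 1))"
      using sstep[OF \<open>t - 1 \<ge> 1\<close>] by simp
    then show ?thesis using closest_point_in_set[OF Scl Sne] by simp
  qed
  have THb: "norm (TH t) \<le> KTh" and CHb: "norm (CH t) \<le> Kc" if "t \<ge> 1" for t
    using Ain[OF that] by (auto simp: S_def TH_def CH_def mem_Times_iff)
  have pw: "norm (gth t) \<le> C1 \<and> norm (gc t) \<le> C2 \<and>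
            (norm (r t))\<^sup>2 \<le> W\<^sup>2 + gth t \<bullet> (TH t - Th) + gc t \<bullet> (CH t - cc) \<and>
            r t = Y1 (X t) *v TH t + Y2 (X t) *v CH t - model Y1 Y2 (X t) Th cc + wi t"
    if t: "t \<ge> 1" for t
    using pointwise[of Y1 "X t" K1 Y2 K2 "TH t" KTh Th "CH t" Kc cc "wi t" W C1 C2 f0 B "U t"]
      Y1_bd Y2_bd THb[OF t] Th_bd CHb[OF t] ccb wb C1_def C2_def
    unfolding gth_def gc_def r_def Yo_def by auto
  have dyn: "\<forall>t\<ge>1. X (Suc t) = f0 (X t) + r t"
  proof (intro allI impI)
    fix t :: nat assume t: "t \<ge> 1"
    have "X (Suc t) = plant_next f0 B Y1 Y2 Th cc (wi t) (X t) (U t)"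
      using sstep[OF t] by (simp add: X_def)
    also have "\<dots> = f0 (X t) + (Y1 (X t) *v TH t + Y2 (X t) *v CH t - model Y1 Y2 (X t) Th cc + wi t)"
      unfolding U_def using plant_ce[of B "X t" f0 Y1 Y2 Th cc "wi t"] full_act by simp
    also have "\<dots> = f0 (X t) + r t" using pw[OF t] by simp
    finally show "X (Suc t) = f0 (X t) + r t" .
  qed
  have X1: "X 1 = 0" by (simp add: X_def s_def)
  have tr: "(\<Sum>t=1..T. norm (X t)) \<le> \<gamma> / (1 - \<rho>) * (\<Sum>t=1..T. norm (r t))"
    by (rule traj[OF iss X1 dyn])
  have diam: "\<forall>a\<in>S. \<forall>b\<in>S. norm (a - b) \<le> 2 * R"
  proof (intro ballI)
    fix a b assume "a \<in> S" "b \<in> S"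
    then have n: "norm (fst a) \<le> KTh" "norm (snd a) \<le> Kc" "norm (fst b) \<le> KTh" "norm (snd b) \<le> Kc"
      by (auto simp: S_def mem_Times_iff)
    have "norm (fst a - fst b) \<le> 2 * KTh" "norm (snd a - snd b) \<le> 2 * Kc"
      using n norm_triangle_ineq4[of "fst a" "fst b"] norm_triangle_ineq4[of "snd a" "snd b"] by linarith+
    then have "(norm (fst a - fst b))\<^sup>2 \<le> (2 * KTh)\<^sup>2" "(norm (snd a - snd b))\<^sup>2 \<le> (2 * Kc)\<^sup>2"
      by (meson power_mono norm_ge_zero)+
    then have "sqrt ((norm (fst a - fst b))\<^sup>2 + (norm (snd a - snd b))\<^sup>2) \<le> sqrt ((2 * KTh)\<^sup>2 + (2 * Kc)\<^sup>2)"
      by (intro real_sqrt_le_mono) simp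
    also have "sqrt ((2 * KTh)\<^sup>2 + (2 * Kc)\<^sup>2) = 2 * R"
    proof -
      have e: "(2 * KTh)\<^sup>2 + (2 * Kc)\<^sup>2 = 2\<^sup>2 * (KTh\<^sup>2 + Kc\<^sup>2)" by (simp add: algebra_simps power2_eq_square)
      have "sqrt (2\<^sup>2 * (KTh\<^sup>2 + Kc\<^sup>2)) = sqrt (2\<^sup>2) * sqrt (KTh\<^sup>2 + Kc\<^sup>2)" by (rule real_sqrt_mult)
      also have "sqrt ((2::real)\<^sup>2) = 2" using real_sqrt_abs[of 2] by simp
      finally show ?thesis unfolding R_def e .
    qed
    finally have "norm (fst a - fst b, snd a - snd b) \<le> 2 * R" by (simp add: norm_Pair)
    moreover have "(fst a - fst b, snd a - snd b) = a - b" by (simp add: prod_eq_iff)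
    ultimately show "norm (a - b) \<le> 2 * R" by simp
  qed
  have gb: "\<forall>t\<ge>1. norm (g t) \<le> G"
  proof (intro allI impI)
    fix t :: nat assume t: "t \<ge> 1"
    have "(norm (gth t))\<^sup>2 \<le> C1\<^sup>2" "(norm (gc t))\<^sup>2 \<le> C2\<^sup>2"
      using pw[OF t] by (simp_all add: power_mono)
    then show "norm (g t) \<le> G" unfolding g_def G_def norm_Pair by (intro real_sqrt_le_mono) simp
  qed
  have ogd_b: "(\<Sum>t=1..T. g t \<bullet> (A t - (Th, cc))) \<le> 3 * R * G * sqrt (real T)"
  proof (rule ogd[OF Scv Scl Sne diam])
    show "A 1 \<in> S" using Ain by simp
    show "\<forall>t\<ge>1. A (Suc t) = closest_point S (A t - (2 * R / (G * sqrt (real t))) *\<^sub>R g t)"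
      using sstep by (simp add: A_def)
    show "\<forall>t\<ge>1. norm (g t) \<le> G" by (rule gb)
    show "(Th, cc) \<in> S" using Th_bd ccb by (simp add: S_def)
  qed
  have ginner: "g t \<bullet> (A t - (Th, cc)) = gth t \<bullet> (TH t - Th) + gc t \<bullet> (CH t - cc)" for t
  proof -
    have "A t - (Th, cc) = (TH t - Th, CH t - cc)" by (simp add: TH_def CH_def prod_eq_iff)
    then show ?thesis by (simp add: g_def)
  qed
  show ?thesis
  proof (intro exI conjI)
    show "\<forall>t. 0 \<le> norm (r t)" by simp
    show "(\<Sum>t=1..T. norm (fst (base_env f0 B Y1 Y2 Th KTh Kc C1 C2 cc wi a1 (t - 1))))
                \<le> \<gamma> / (1 - \<rho>) * (\<Sum>t=1..T. norm (r t))"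
      using tr by (simp add: X_def s_def)
    have "(\<Sum>t=1..T. (norm (r t))\<^sup>2) \<le> (\<Sum>t=1..T. W\<^sup>2 + g t \<bullet> (A t - (Th, cc)))"
    proof (rule sum_mono)
      fix t assume "t \<in> {1..T}"
      then have t: "t \<ge> 1" by simp
      have "(norm (r t))\<^sup>2 \<le> W\<^sup>2 + gth t \<bullet> (TH t - Th) + gc t \<bullet> (CH t - cc)"
        using pw[OF t] by (elim conjE)
      then show "(norm (r t))\<^sup>2 \<le> W\<^sup>2 + g t \<bullet> (A t - (Th, cc))" unfolding ginner by simp
    qed
    also have "\<dots> = real T * W\<^sup>2 + (\<Sum>t=1..T. g t \<bullet> (A t - (Th, cc)))"
      by (simp add: sum.distrib)
    also have "\<dots> \<le> real T * W\<^sup>2 + 3 * R * G * sqrt (real T)"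
      using ogd_b by simp
    finally show "(\<Sum>t=1..T. (norm (r t))\<^sup>2) \<le> real T * W\<^sup>2
                + 3 * sqrt (KTh\<^sup>2 + Kc\<^sup>2) * sqrt (C1\<^sup>2 + C2\<^sup>2) * sqrt (real T)"
      unfolding R_def G_def .
  qed
qed

theorem corollary4:
  fixes f0 :: "real^'n \<Rightarrow> real^'n"
    and B :: "real^'n \<Rightarrow> real^'m^'n"
    and Y1 :: "real^'n \<Rightarrow> real^'p^'n"
    and Y2 :: "real^'n \<Rightarrow> real^'h^'n"
    and Th :: "real^'p"
    and c :: "nat \<Rightarrow> real^'h"
    and w :: "nat \<Rightarrow> nat \<Rightarrow> real^'n"
    and K1 K2 KTh Kc W \<beta> \<gamma> \<rho> C1 C2 :: real
    and N T :: nat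
    and th1 :: "real^'p" and ch1 :: "nat \<Rightarrow> real^'h"
    and a1 :: "nat \<Rightarrow> (real^'p) \<times> (real^'h)"
  assumes full_act: "\<forall>x. rank (B x) = CARD('n)"
    and iss: "eISS f0 \<beta> \<gamma> \<rho>"
    and dist: "\<forall>i t. norm (w i t) \<le> W"
    and Y1_bd: "\<forall>x. specnorm (Y1 x) \<le> K1"
    and Y2_bd: "\<forall>x. specnorm (Y2 x) \<le> K2"
    and Th_bd: "norm Th \<le> KTh"
    and c_bd: "\<forall>i. norm (c i) \<le> Kc"
    and C1_def: "C1 = 4 * K1\<^sup>2 * KTh + 4 * K1 * K2 * Kc + 2 * K1 * W"
    and C2_def: "C2 = 4 * K2\<^sup>2 * Kc + 4 * K1 * K2 * KTh + 2 * K2 * W"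
    and N: "N \<ge> 1" and T: "T \<ge> 1"
    and th1_in: "norm th1 \<le> KTh"
    and ch1_in: "\<forall>i. norm (ch1 i) \<le> Kc"
    and a1_in: "\<forall>i. norm (fst (a1 i)) \<le> KTh \<and> norm (snd (a1 i)) \<le> Kc"
  shows "ACE N T (omac_x f0 B Y1 Y2 Th KTh Kc C1 C2 c w T th1 ch1)
           \<le> \<gamma> / (1 - \<rho>) * sqrt (W\<^sup>2 + 3 * (KTh * C1 * (1 / sqrt (real N))
                                         + Kc * C2 * (1 / sqrt (real T))))
       \<and> ACE N T (base_x f0 B Y1 Y2 Th KTh Kc C1 C2 c w a1)
           \<le> \<gamma> / (1 - \<rho>) * sqrt (W\<^sup>2 + 3 * sqrt (KTh\<^sup>2 + Kc\<^sup>2) * sqrt (C1\<^sup>2 + C2\<^sup>2)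
                                         * (1 / sqrt (real T)))"
proof -
  let ?\<Gamma> = "\<gamma> / (1 - \<rho>)"
  have p: "\<gamma> \<ge> 0" "\<rho> < 1" using iss by (auto simp: eISS_def)
  have G0: "?\<Gamma> \<ge> 0" using p by simp
  have KTh0: "KTh \<ge> 0" using Th_bd norm_ge_zero order_trans by blast
  have Kc0: "Kc \<ge> 0" using c_bd norm_ge_zero order_trans by blast
  have Npos: "sqrt (real N) > 0" "real N = sqrt (real N) * sqrt (real N)" using N by auto
  have Tpos: "sqrt (real T) > 0" "real T = sqrt (real T) * sqrt (real T)" using T by auto
  have partA: "ACE N T (omac_x f0 B Y1 Y2 Th KTh Kc C1 C2 c w T th1 ch1)
           \<le> ?\<Gamma> * sqrt (W\<^sup>2 + 3 * (KTh * C1 * (1 / sqrt (real N)) + Kc * C2 * (1 / sqrt (real T))))"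
  proof -
    define z where "z i = omac_theta f0 B Y1 Y2 Th KTh Kc C1 C2 c w T th1 ch1 (i - 1)" for i
    define g where "g i = omac_outer_grad f0 B Y1 Y2 Th Kc C2 (c i) (w i) (z i) (ch1 i) T" for i
    have zstep: "z (Suc i) = closest_point (cball 0 KTh) (z i - (2 * KTh / (C1 * real T * sqrt (real i))) *\<^sub>R g i)"
      if i1: "i \<ge> 1" for i
    proof -
      obtain j where j: "i = Suc j" using i1 by (cases i) auto
      show ?thesis unfolding z_def g_def j by (simp add: Let_def projball_def)
    qed
    have zin: "z i \<in> cball 0 KTh" if "i \<ge> 1" for i
    proof (cases "i = 1")
      case True then show ?thesis using th1_in by (simp add: z_def)
    next
      case False
      then have "i - 1 \<ge> 1" using that by simp
      have "z i = z (Suc (i - 1))" using that by simp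
      also have "\<dots> = closest_point (cball 0 KTh) (z (i - 1) - (2 * KTh / (C1 * real T * sqrt (real (i - 1)))) *\<^sub>R g (i - 1))"
        by (rule zstep) fact
      finally show ?thesis using closest_point_in_set[of "cball 0 KTh"] KTh0 by simp
    qed
    have env: "\<exists>b. (\<forall>t. 0 \<le> b t)
           \<and> (\<Sum>t=1..T. norm (fst (omac_env f0 B Y1 Y2 Th Kc C2 (c i) (w i) (z i) (ch1 i) (t - 1))))
                \<le> ?\<Gamma> * (\<Sum>t=1..T. b t)
           \<and> (\<Sum>t=1..T. (b t)\<^sup>2) \<le> real T * W\<^sup>2 + g i \<bullet> (z i - Th) + 3 * Kc * C2 * sqrt (real T)"
      and gb: "norm (g i) \<le> real T * C1" if "i \<ge> 1" for i
      using omac_env_bound[OF full_act iss _ Y1_bd Y2_bd Th_bd _ C1_def C2_def, of "w i" "c i" "z i" "ch1 i" T]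
        dist c_bd zin[OF that] ch1_in unfolding g_def by auto
    have ogd_o: "(\<Sum>i=1..N. g i \<bullet> (z i - Th)) \<le> 3 * KTh * (C1 * real T) * sqrt (real N)"
    proof (rule ogd[where S = "cball 0 KTh"])
      show "convex (cball (0::real^'p) KTh)" by simp
      show "closed (cball (0::real^'p) KTh)" by simp
      show "cball (0::real^'p) KTh \<noteq> {}" using KTh0 by simp
      show "\<forall>a\<in>cball 0 KTh. \<forall>b\<in>cball 0 KTh. norm (a - b) \<le> 2 * KTh" by (rule ball_diam)
      show "z 1 \<in> cball 0 KTh" using zin by simp
      show "\<forall>t\<ge>1. z (Suc t) = closest_point (cball 0 KTh) (z t - (2 * KTh / (C1 * real T * sqrt (real t))) *\<^sub>R g t)"
        using zstep by blast
      show "\<forall>t\<ge>1. norm (g t) \<le> C1 * real T" using gb by (simp add: mult.commute)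
      show "Th \<in> cball 0 KTh" using Th_bd by simp
    qed
    show ?thesis
    proof (rule combine[OF _ _ G0 N T])
      show "\<forall>i\<in>{1..N}. \<exists>b. (\<forall>t. 0 \<le> b t) \<and>
              (\<Sum>t=1..T. norm (omac_x f0 B Y1 Y2 Th KTh Kc C1 C2 c w T th1 ch1 i t)) \<le> ?\<Gamma> * (\<Sum>t=1..T. b t) \<and>
              (\<Sum>t=1..T. (b t)\<^sup>2) \<le> real T * W\<^sup>2 + g i \<bullet> (z i - Th) + 3 * Kc * C2 * sqrt (real T)"
        using env unfolding omac_x_def z_def by auto
      have "(\<Sum>i=1..N. real T * W\<^sup>2 + g i \<bullet> (z i - Th) + 3 * Kc * C2 * sqrt (real T))
          = real N * (real T * W\<^sup>2) + (\<Sum>i=1..N. g i \<bullet> (z i - Th)) + real N * (3 * Kc * C2 * sqrt (real T))"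
        by (simp add: sum.distrib)
      also have "\<dots> \<le> real N * (real T * W\<^sup>2) + 3 * KTh * (C1 * real T) * sqrt (real N) + real N * (3 * Kc * C2 * sqrt (real T))"
        using ogd_o by simp
      also have "\<dots> = real N * real T * (W\<^sup>2 + 3 * (KTh * C1 * (1 / sqrt (real N)) + Kc * C2 * (1 / sqrt (real T))))"
      proof -
        have a: "3 * KTh * (C1 * real T) * sqrt (real N) = real N * real T * (3 * (KTh * C1 * (1 / sqrt (real N))))"
          using Npos by (simp add: field_simps)
        have b: "real N * (3 * Kc * C2 * sqrt (real T)) = real N * real T * (3 * (Kc * C2 * (1 / sqrt (real T))))"
          using Tpos by (simp add: field_simps)
        show ?thesis unfolding a b by (simp add: algebra_simps)
      qed
      finally show "(\<Sum>i=1..N. real T * W\<^sup>2 + g i \<bullet> (z i - Th) + 3 * Kc * C2 * sqrt (real T))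
          \<le> real N * real T * (W\<^sup>2 + 3 * (KTh * C1 * (1 / sqrt (real N)) + Kc * C2 * (1 / sqrt (real T))))" .
    qed
  qed
  have partB: "ACE N T (base_x f0 B Y1 Y2 Th KTh Kc C1 C2 c w a1)
           \<le> ?\<Gamma> * sqrt (W\<^sup>2 + 3 * sqrt (KTh\<^sup>2 + Kc\<^sup>2) * sqrt (C1\<^sup>2 + C2\<^sup>2) * (1 / sqrt (real T)))"
  proof (rule combine[OF _ _ G0 N T])
    show "\<forall>i\<in>{1..N}. \<exists>b. (\<forall>t. 0 \<le> b t) \<and>
            (\<Sum>t=1..T. norm (base_x f0 B Y1 Y2 Th KTh Kc C1 C2 c w a1 i t)) \<le> ?\<Gamma> * (\<Sum>t=1..T. b t) \<and>
            (\<Sum>t=1..T. (b t)\<^sup>2) \<le> real T * W\<^sup>2 + 3 * sqrt (KTh\<^sup>2 + Kc\<^sup>2) * sqrt (C1\<^sup>2 + C2\<^sup>2) * sqrt (real T)"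
    proof
      fix i assume "i \<in> {1..N}"
      show "\<exists>b. (\<forall>t. 0 \<le> b t) \<and>
            (\<Sum>t=1..T. norm (base_x f0 B Y1 Y2 Th KTh Kc C1 C2 c w a1 i t)) \<le> ?\<Gamma> * (\<Sum>t=1..T. b t) \<and>
            (\<Sum>t=1..T. (b t)\<^sup>2) \<le> real T * W\<^sup>2 + 3 * sqrt (KTh\<^sup>2 + Kc\<^sup>2) * sqrt (C1\<^sup>2 + C2\<^sup>2) * sqrt (real T)"
        using base_env_bound[OF full_act iss _ Y1_bd Y2_bd Th_bd _ C1_def C2_def, of "w i" "c i" "a1 i" T]
          dist c_bd a1_in unfolding base_x_def by auto
    qed
    have "(\<Sum>i=1..N. real T * W\<^sup>2 + 3 * sqrt (KTh\<^sup>2 + Kc\<^sup>2) * sqrt (C1\<^sup>2 + C2\<^sup>2) * sqrt (real T))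
        = real N * (real T * W\<^sup>2 + 3 * sqrt (KTh\<^sup>2 + Kc\<^sup>2) * sqrt (C1\<^sup>2 + C2\<^sup>2) * sqrt (real T))" by simp
    also have "\<dots> = real N * real T * (W\<^sup>2 + 3 * sqrt (KTh\<^sup>2 + Kc\<^sup>2) * sqrt (C1\<^sup>2 + C2\<^sup>2) * (1 / sqrt (real T)))"
      using Tpos by (simp add: field_simps)
    finally show "(\<Sum>i=1..N. real T * W\<^sup>2 + 3 * sqrt (KTh\<^sup>2 + Kc\<^sup>2) * sqrt (C1\<^sup>2 + C2\<^sup>2) * sqrt (real T))
        \<le> real N * real T * (W\<^sup>2 + 3 * sqrt (KTh\<^sup>2 + Kc\<^sup>2) * sqrt (C1\<^sup>2 + C2\<^sup>2) * (1 / sqrt (real T)))" by (rule eq_refl)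
  qed
  show ?thesis using partA partB by simp
qed


end
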